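(* Let $m\geq 1$ and let $f=a_0+a_1z+\cdots+a_mz^m\in\mathbb{Z}[z]$ be a primitive polynomial such that $a_m=\pm p^kd$ for some positive integers $k,d$ and a prime $p$ with $p\nmid d$, and such that every complex zero of $f$ lies outside the closed disk $\{z\in\mathbb{C}:|z|\leq d\}$. Suppose there is an index $j$ with $1\leq j\leq m$ such that $p\nmid a_{m-j}$, and suppose $|a_0/q|\leq|a_m|$, where $q$ is the smallest prime divisor of $a_0$. Then $f$ is a product of at most $\min\{k,j\}$ irreducible polynomials in $\mathbb{Z}[z]$. In particular, if $k=1$ or $j=1$, then $f$ is irreducible in $\mathbb{Z}[z]$.
   Context: A polynomial in $\mathbb{Z}[z]$ is primitive if the greatest common divisor of its coefficients is $1$. "$f$ is a product of at most $r$ irreducible polynomials" means that in a factorization of $f$ into irreducible elements of $\mathbb{Z}[z]$, the number of factors (counted with multiplicity) is at most $r$. *)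

theory Defs
  imports Complex_Main "HOL-Computational_Algebra.Computational_Algebra"
begin

definition product_of_at_most_irreducibles :: "nat \<Rightarrow> 'a::comm_semiring_1 \<Rightarrow> bool" where
  "product_of_at_most_irreducibles r f \<longleftrightarrow>
     (\<exists>A. (\<forall>g\<in>#A. irreducible g) \<and> prod_mset A = f \<and> size A \<le> r)"

end

theory Submission
  imports Defs
begin


lemma prod_mset_gt:
  fixes M :: "real multiset" and D :: real
  assumes "M \<noteq> {#}" "\<forall>x\<in>#M. x > D" "D \<ge> 1"
  shows "prod_mset M > D"
  using assms
proof (induction M)
  case empty then show ?case by simp
next
  case (add x M)
  show ?case
  proof (cases "M = {#}")
    case True then show ?thesis using add by simp
  next
    case False
    then have "prod_mset M > D" using add by simp
    moreover have "x > D" using add by simp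
    ultimately have "x * prod_mset M > 1 * D" using add(4)
      by (intro mult_strict_mono') auto
    then show ?thesis by (simp add: mult.commute)
  qed
qed

lemma norm_prod_mset_cx: "cmod (prod_mset (M::complex multiset)) = prod_mset (image_mset cmod M)"
  by (induction M) (auto simp: norm_mult)

lemma root_bound:
  fixes g :: "complex poly" and D :: real
  assumes "degree g \<ge> 1" "\<forall>z. poly g z = 0 \<longrightarrow> cmod z > D" "D \<ge> 1"
  shows "cmod (poly g 0) > cmod (lead_coeff g) * D"
proof -
  have g0: "g \<noteq> 0" using assms(1) by auto
  have "poly g 0 = poly (smult (lead_coeff g) (\<Prod>x\<in>#proots g. [:-x, 1:])) 0"
    by (simp add: complex_poly_decompose_multiset)
  also have "\<dots> = lead_coeff g * (\<Prod>x\<in>#proots g. - x)"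
    by (simp add: poly_prod_mset multiset.map_comp o_def)
  finally have e: "cmod (poly g 0) = cmod (lead_coeff g) * (\<Prod>x\<in>#proots g. cmod x)"
    by (simp add: norm_mult norm_prod_mset_cx multiset.map_comp o_def)
  have "(\<Prod>x\<in>#proots g. cmod x) > D"
  proof (rule prod_mset_gt)
    show "image_mset cmod (proots g) \<noteq> {#}"
      using assms(1) size_proots_complex[of g] by auto
    show "\<forall>x\<in>#image_mset cmod (proots g). D < x" using assms(2) g0 by auto
  qed (use assms in auto)
  moreover have "cmod (lead_coeff g) > 0" using g0 by simp
  ultimately show ?thesis unfolding e by simp
qed


lemma map_poly_of_int_mult:
  "map_poly (of_int::int\<Rightarrow>complex) (g * h) = map_poly of_int g * map_poly of_int h"
  by (rule poly_eqI) (simp add: coeff_map_poly coeff_mult of_int_sum)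

lemma degree_map_poly_of_int:
  "degree (map_poly (of_int::int\<Rightarrow>complex) g) = degree g"
  by (rule degree_map_poly) simp

lemma lead_coeff_map_poly_of_int:
  "lead_coeff (map_poly (of_int::int\<Rightarrow>complex) g) = of_int (lead_coeff g)"
  by (simp add: degree_map_poly_of_int coeff_map_poly)

lemma coeff0_map_poly_of_int:
  "poly (map_poly (of_int::int\<Rightarrow>complex) g) 0 = of_int (coeff g 0)"
  by (simp add: poly_0_coeff_0 coeff_map_poly)

lemma dvd_coeff_mult:
  fixes g h :: "int poly"
  assumes "\<forall>i. i + s > n1 \<longrightarrow> p dvd coeff g i" "\<forall>i. i + t > n2 \<longrightarrow> p dvd coeff h i"
    and "i + s + t > n1 + n2"
  shows "p dvd coeff (g * h) i"
  unfolding coeff_mult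
proof (rule dvd_sum)
  fix l assume "l \<in> {..i}"
  then have "l + s > n1 \<or> (i - l) + t > n2" using assms(3) by auto
  then show "p dvd coeff g l * coeff h (i - l)" using assms(1,2) by auto
qed

lemma dvd_coeff_prod_mset:
  fixes A :: "int poly multiset"
  assumes "\<forall>g\<in>#A. p dvd lead_coeff g" "0 \<notin># A"
  shows "\<forall>i. i + size A > degree (prod_mset A) \<longrightarrow> p dvd coeff (prod_mset A) i"
  using assms
proof (induction A)
  case empty
  then show ?case by (auto simp: coeff_1)
next
  case (add g A)
  have IH: "\<forall>i. i + size A > degree (prod_mset A) \<longrightarrow> p dvd coeff (prod_mset A) i"
    using add by auto
  have g0: "g \<noteq> 0" using add by auto
  have P0: "prod_mset A \<noteq> 0" using add by auto
  have G: "\<forall>i. i + 1 > degree g \<longrightarrow> p dvd coeff g i"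
  proof (intro allI impI)
    fix i assume "i + 1 > degree g"
    then have "i = degree g \<or> i > degree g" by auto
    then show "p dvd coeff g i" using add(2) by (auto simp: coeff_eq_0)
  qed
  show ?case
  proof (intro allI impI)
    fix i assume "i + size (add_mset g A) > degree (prod_mset (add_mset g A))"
    then have "i + 1 + size A > degree g + degree (prod_mset A)"
      using g0 P0 by (simp add: degree_mult_eq)
    from dvd_coeff_mult[OF G IH this] show "p dvd coeff (prod_mset (add_mset g A)) i" by simp
  qed
qed

lemma pow_dvd_lead_coeff_prod_mset:
  fixes A :: "int poly multiset"
  assumes "\<forall>g\<in>#A. p dvd lead_coeff g"
  shows "p ^ size A dvd lead_coeff (prod_mset A)"
  using assms
proof (induction A)
  case empty then show ?case by simp
next
  case (add g A)
  then show ?case by (simp add: lead_coeff_mult mult_dvd_mono)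
qed

lemma exists_irr_factorization:
  fixes f :: "int poly"
  assumes "f \<noteq> 0" "\<not> is_unit f"
  shows "\<exists>A. (\<forall>g\<in>#A. irreducible g) \<and> prod_mset A = f"
proof -
  obtain A where A: "\<And>x. x \<in># A \<Longrightarrow> prime x" "normalize (prod_mset A) = normalize f"
    using prime_factorization_exists'[OF assms(1)] by blast
  obtain u where u: "is_unit u" "f = u * prod_mset A"
    using associatedE2[OF A(2)] by blast
  have "A \<noteq> {#}" using u assms(2) by auto
  then obtain a where a: "a \<in># A" by blast
  define B where "B = add_mset (u * a) (A - {#a#})"
  have "prod_mset B = u * (a * prod_mset (A - {#a#}))" unfolding B_def by (simp add: mult.assoc)
  also have "a * prod_mset (A - {#a#}) = prod_mset A" using a by (simp add: prod_mset.remove)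
  finally have "prod_mset B = f" using u by simp
  moreover have "\<forall>g\<in>#B. irreducible g"
  proof
    fix g assume "g \<in># B"
    then have "g = u * a \<or> g \<in># A" unfolding B_def by (auto dest: in_diffD)
    then show "irreducible g"
      using A(1) a u(1) irreducible_mult_unit_left prime_elem_imp_irreducible prime_imp_prime_elem
      by metis
  qed
  ultimately show ?thesis by blast
qed

theorem theorem3:
  fixes f :: "int poly" and m k j :: nat and p d q :: int
  assumes "m \<ge> 1"
    and "degree f = m"
    and "content f = 1"
    and "prime p" and "k > 0" and "d > 0" and "\<not> p dvd d"
    and "coeff f m = p ^ k * d \<or> coeff f m = - (p ^ k * d)"
    and "\<forall>z::complex. poly (map_poly of_int f) z = 0 \<longrightarrow> cmod z > of_int d"
    and "1 \<le> j" and "j \<le> m" and "\<not> p dvd coeff f (m - j)"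
    and "prime q" and "q dvd coeff f 0" and "\<forall>r. prime r \<and> r dvd coeff f 0 \<longrightarrow> q \<le> r"
    and "\<bar>real_of_int (coeff f 0) / real_of_int q\<bar> \<le> \<bar>real_of_int (coeff f m)\<bar>"
  shows "product_of_at_most_irreducibles (min k j) f \<and> ((k = 1 \<or> j = 1) \<longrightarrow> irreducible f)"
proof -
  have f0: "f \<noteq> 0" using assms(1,2) by auto
  have lcf: "lead_coeff f = coeff f m" using assms(2) by simp
  have q0: "q > 0" using assms(13) prime_gt_0_int by blast
  have d1: "real_of_int d \<ge> 1" using assms(6) by simp
  have a0le: "\<bar>coeff f 0\<bar> \<le> q * \<bar>coeff f m\<bar>"
  proof -
    have "\<bar>real_of_int (coeff f 0)\<bar> / real_of_int q \<le> \<bar>real_of_int (coeff f m)\<bar>"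
      using assms(16) q0 by simp
    then have "\<bar>real_of_int (coeff f 0)\<bar> \<le> real_of_int q * \<bar>real_of_int (coeff f m)\<bar>"
      using q0 by (simp add: divide_le_eq mult.commute)
    then show ?thesis by (metis of_int_abs of_int_le_iff of_int_mult)
  qed
  have rootsF: "\<And>z. poly (map_poly (of_int::int\<Rightarrow>complex) f) z = 0 \<Longrightarrow> cmod z > of_int d"
    using assms(9) by blast
  have key: "\<bar>lead_coeff h\<bar> > d" if fgh: "f = g * h" and dg: "degree g \<ge> 1" and dh: "degree h \<ge> 1" for g h
  proof -
    define G where "G = map_poly (of_int::int\<Rightarrow>complex) g"
    define H where "H = map_poly (of_int::int\<Rightarrow>complex) h"
    have FGH: "map_poly (of_int::int\<Rightarrow>complex) f = G * H"
      unfolding G_def H_def fgh by (rule map_poly_of_int_mult)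
    have rG: "\<forall>z. poly G z = 0 \<longrightarrow> cmod z > of_int d" using rootsF FGH by auto
    have rH: "\<forall>z. poly H z = 0 \<longrightarrow> cmod z > 1" using rootsF FGH d1 by fastforce
    have "cmod (poly G 0) > cmod (lead_coeff G) * of_int d"
      by (rule root_bound) (use dg rG d1 in \<open>auto simp: G_def degree_map_poly_of_int\<close>)
    then have gb: "\<bar>coeff g 0\<bar> > \<bar>lead_coeff g\<bar> * d"
      unfolding G_def lead_coeff_map_poly_of_int coeff0_map_poly_of_int norm_of_int
      by (metis of_int_abs of_int_less_iff of_int_mult)
    have "cmod (poly H 0) > cmod (lead_coeff H) * 1"
      by (rule root_bound) (use dh rH in \<open>auto simp: H_def degree_map_poly_of_int\<close>)
    then have hb: "\<bar>coeff h 0\<bar> > \<bar>lead_coeff h\<bar>"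
      unfolding H_def lead_coeff_map_poly_of_int coeff0_map_poly_of_int norm_of_int
      by (metis mult.right_neutral of_int_abs of_int_less_iff)
    have h0: "h \<noteq> 0" using dh by auto
    have "lead_coeff h \<noteq> 0" using h0 by simp
    then have lh: "\<bar>lead_coeff h\<bar> \<ge> 1" by arith
    have g0: "g \<noteq> 0" using dg by auto
    have "lead_coeff g \<noteq> 0" using g0 by simp
    then have lg: "\<bar>lead_coeff g\<bar> > 0" by arith
    have a0: "coeff f 0 = coeff g 0 * coeff h 0" using fgh by (simp add: coeff_mult_0)
    have hnu: "\<not> is_unit (coeff h 0)" "coeff h 0 \<noteq> 0" using hb lh by auto
    obtain r where r: "r dvd coeff h 0" "prime r" using prime_divisor_exists[OF hnu(2) hnu(1)] by blast
    have "r dvd coeff f 0" using r(1) a0 by simp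
    then have "q \<le> r" using assms(15) r(2) by blast
    moreover have "\<bar>r\<bar> \<le> \<bar>coeff h 0\<bar>" using r(1) hnu(2) by (rule dvd_imp_le_int[rotated])
    moreover have "r > 0" using r(2) prime_gt_0_int by blast
    ultimately have qh: "q \<le> \<bar>coeff h 0\<bar>" by simp
    have "\<bar>coeff g 0\<bar> * q \<le> \<bar>coeff g 0\<bar> * \<bar>coeff h 0\<bar>"
      using qh by (simp add: mult_left_mono)
    also have "\<dots> = \<bar>coeff f 0\<bar>" using a0 by (simp add: abs_mult)
    also have "\<dots> \<le> q * \<bar>coeff f m\<bar>" by (rule a0le)
    finally have "\<bar>coeff g 0\<bar> \<le> \<bar>coeff f m\<bar>" using q0 by (simp add: mult.commute)
    also have "coeff f m = lead_coeff g * lead_coeff h" using lcf fgh by (simp add: lead_coeff_mult)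
    finally have "\<bar>lead_coeff g\<bar> * d < \<bar>lead_coeff g\<bar> * \<bar>lead_coeff h\<bar>"
      using gb by (simp add: abs_mult)
    then show ?thesis using lg by simp
  qed
  have pdvd: "p dvd lead_coeff g" if fgh: "f = g * h" and dg: "degree g \<ge> 1" and dh: "degree h \<ge> 1" for g h
  proof (rule ccontr)
    assume np: "\<not> p dvd lead_coeff g"
    have gt: "\<bar>lead_coeff g\<bar> > d" using key[of h g] fgh dg dh by (simp add: mult.commute)
    have cop: "coprime (lead_coeff g) (p ^ k)" using prime_imp_power_coprime[OF assms(4) np] .
    have "coeff f m = lead_coeff g * lead_coeff h" using lcf fgh by (simp add: lead_coeff_mult)
    then have "lead_coeff g dvd p ^ k * d" using assms(8) by (metis dvd_minus_iff dvd_triv_left)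
    then have "lead_coeff g dvd d" using cop by (simp add: coprime_dvd_mult_right_iff)
    then have "\<bar>lead_coeff g\<bar> \<le> \<bar>d\<bar>" using assms(6) by (intro dvd_imp_le_int) auto
    then show False using gt assms(6) by simp
  qed
  have fnu: "\<not> is_unit f"
  proof
    assume "is_unit f"
    then have "degree f \<le> degree (1::int poly)" by (intro dvd_imp_degree_le) auto
    then show False using assms(1,2) by simp
  qed
  have const_unit: "is_unit r" if "r dvd f" "degree r = 0" for r :: "int poly"
  proof -
    have r: "r = [:coeff r 0:]" using degree_0_id[OF that(2)] by simp
    have "[:coeff r 0:] dvd f" using that(1) r by simp
    then have "coeff r 0 dvd 1" using assms(3) by (simp add: const_poly_dvd_iff_dvd_content)
    then show ?thesis by (subst r) (simp add: is_unit_const_poly_iff)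
  qed
  have nonirr: "\<exists>A. (\<forall>g\<in>#A. irreducible g) \<and> prod_mset A = f \<and> size A \<le> min k j"
    if nirr: "\<not> irreducible f"
  proof -
    obtain A where A: "\<forall>g\<in>#A. irreducible g" "prod_mset A = f"
      using exists_irr_factorization[OF f0 fnu] by blast
    have each: "p dvd lead_coeff g \<and> g \<noteq> 0" if gA: "g \<in># A" for g
    proof -
      define R where "R = prod_mset (A - {#g#})"
      have fgR: "f = g * R" unfolding R_def using gA A(2) by (simp add: prod_mset.remove)
      have ig: "irreducible g" using A(1) gA by blast
      have dg: "degree g \<ge> 1"
      proof (rule ccontr)
        assume "\<not> degree g \<ge> 1"
        then have "is_unit g" using const_unit[of g] fgR by auto
        then show False using ig by (simp add: irreducible_not_unit)
      qed
      have dR: "degree R \<ge> 1"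
      proof (rule ccontr)
        assume "\<not> degree R \<ge> 1"
        then have "is_unit R" using const_unit[of R] fgR by auto
        then have "irreducible f" using ig fgR irreducible_mult_unit_left[of R g]
          by (simp add: mult.commute)
        then show False using nirr by simp
      qed
      show ?thesis using pdvd[OF fgR dg dR] dg by auto
    qed
    have sk: "size A \<le> k"
    proof (rule ccontr)
      assume "\<not> size A \<le> k"
      then have "p ^ (Suc k) dvd p ^ size A" by (intro le_imp_power_dvd) simp
      also have "p ^ size A dvd lead_coeff f"
        using pow_dvd_lead_coeff_prod_mset[of A p] each A(2) by auto
      also have "lead_coeff f = coeff f m" by (rule lcf)
      finally have "p ^ k * p dvd p ^ k * d" using assms(8) by (auto simp: mult.commute)
      then have "p dvd d" using assms(4) by (subst (asm) dvd_mult_cancel_left) auto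
      then show False using assms(7) by simp
    qed
    have sj: "size A \<le> j"
    proof (rule ccontr)
      assume "\<not> size A \<le> j"
      then have "(m - j) + size A > degree (prod_mset A)" using A(2) assms(2,11) by simp
      then have "p dvd coeff (prod_mset A) (m - j)"
        using dvd_coeff_prod_mset[of A p] each by auto
      then show False using A(2) assms(12) by simp
    qed
    show ?thesis using A sk sj by auto
  qed
  show ?thesis
  proof (cases "irreducible f")
    case True
    have "product_of_at_most_irreducibles (min k j) f"
      unfolding product_of_at_most_irreducibles_def
      by (rule exI[of _ "{#f#}"]) (use True assms(5,10) in auto)
    then show ?thesis using True by simp
  next
    case False
    obtain A where A: "\<forall>g\<in>#A. irreducible g" "prod_mset A = f" "size A \<le> min k j"
      using nonirr[OF False] by blast
    have "product_of_at_most_irreducibles (min k j) f"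
      unfolding product_of_at_most_irreducibles_def using A by blast
    moreover have "\<not> (k = 1 \<or> j = 1)"
    proof
      assume "k = 1 \<or> j = 1"
      then have "size A \<le> 1" using A(3) by auto
      moreover have "A \<noteq> {#}" using A(2) fnu by auto
      ultimately have "size A = 1" by (cases A) auto
      then obtain g where "A = {#g#}" using size_1_singleton_mset by blast
      then show False using A False by simp
    qed
    ultimately show ?thesis by simp
  qed
qed

end
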